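(* Let $n\ge 1$ and for $R>0$ let $P_n(R)$ be the set of monic degree-$n$ polynomials with integer coefficients having a real root $\lambda>1$ with all other roots strictly smaller than $\lambda$ in absolute value, and all of whose roots have absolute value at most $R$. Then $$\lim_{R\to\infty}\frac{|\{p\in P_n(R): p \text{ is reducible over }\mathbb{Z}\}|}{|P_n(R)|}=0.$$
   Context: $|A|$ denotes the cardinality of a finite set $A$. *)

theory Defs
  imports "HOL-Analysis.Analysis" "HOL-Computational_Algebra.Computational_Algebra"
begin

text \<open>P_n(R): monic integer polynomials of degree n having a real root l > 1 which is
  simple (so that every other root, counted with multiplicity, is different from l) and
  all other complex roots have absolute value < l; and all complex roots have modulus at most R.\<close>

definition perron_polys :: "nat \<Rightarrow> real \<Rightarrow> int poly set" where
  "perron_polys n R = {p. lead_coeff p = 1 \<and> degree p = n \<and>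
     (\<exists>l::real. l > 1 \<and> poly (map_poly complex_of_int p) (complex_of_real l) = 0 \<and>
        order (complex_of_real l) (map_poly complex_of_int p) = 1 \<and>
        (\<forall>z. poly (map_poly complex_of_int p) z = 0 \<and> z \<noteq> complex_of_real l \<longrightarrow> cmod z < l)) \<and>
     (\<forall>z. poly (map_poly complex_of_int p) z = 0 \<longrightarrow> cmod z \<le> R)}"

end

theory Submission
  imports Defs
begin


lemma coeff_lin_prod_bound:
  fixes r :: "nat \<Rightarrow> complex" and R :: real
  assumes "R \<ge> 0" "\<forall>i<k. cmod (r i) \<le> R"
  shows "\<forall>j. (j \<le> k \<longrightarrow> cmod (coeff (\<Prod>i<k. [:-r i, 1:]) j) \<le> 2^k * R^(k-j))
             \<and> (j > k \<longrightarrow> coeff (\<Prod>i<k. [:-r i, 1:]) j = 0)"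
  using assms(2)
proof (induction k)
  case 0
  then show ?case by (auto simp: coeff_1 split: if_splits)
next
  case (Suc k)
  define Q where "Q = (\<Prod>i<k. [:-r i, 1:])"
  have IH: "\<forall>j. (j \<le> k \<longrightarrow> cmod (coeff Q j) \<le> 2^k * R^(k-j)) \<and> (j > k \<longrightarrow> coeff Q j = 0)"
    using Suc by (simp add: Q_def)
  have ra: "cmod (r k) \<le> R" using Suc.prems by auto
  have eq: "(\<Prod>i<Suc k. [:-r i, 1:]) = smult (-r k) Q + pCons 0 Q"
    by (simp add: Q_def mult.commute)
  have cf: "coeff (\<Prod>i<Suc k. [:-r i, 1:]) j = - r k * coeff Q j + (case j of 0 \<Rightarrow> 0 | Suc j' \<Rightarrow> coeff Q j')" for j
    unfolding eq by (simp add: coeff_pCons split: nat.splits)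
  show ?case
  proof (intro allI conjI impI)
    fix j assume j: "j \<le> Suc k"
    have t1: "cmod (- r k * coeff Q j) \<le> (if j \<le> k then R * (2^k * R^(k-j)) else 0)"
    proof (cases "j \<le> k")
      case True
      then show ?thesis using IH ra by (simp add: norm_mult mult_mono' assms(1))
    next
      case False
      then show ?thesis using IH assms(1) by simp
    qed
    show "cmod (coeff (\<Prod>i<Suc k. [:-r i, 1:]) j) \<le> 2^Suc k * R^(Suc k - j)"
    proof (cases j)
      case 0
      then show ?thesis using t1 cf[of 0] assms(1)
      proof -
        have "R * (2^k * R^(k-j)) \<le> 2^Suc k * R^(Suc k - j)"
          using 0 assms(1) by (simp add: algebra_simps mult_left_mono)
        moreover have e: "coeff (\<Prod>i<Suc k. [:-r i, 1:]) j = - r k * coeff Q j"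
          using cf[of j] 0 by (simp only: nat.case(1) add_0_right)
        ultimately show ?thesis unfolding e using t1 0 by (simp add: algebra_simps)
      qed
    next
      case (Suc j')
      have t2: "cmod (coeff Q j') \<le> 2^k * R^(k-j')" using IH Suc j by auto
      have "cmod (coeff (\<Prod>i<Suc k. [:-r i, 1:]) j) \<le> (if j \<le> k then R * (2^k * R^(k-j)) else 0) + 2^k * R^(k-j')"
      proof -
        have e: "coeff (\<Prod>i<Suc k. [:-r i, 1:]) j = - r k * coeff Q j + coeff Q j'"
          using cf[of j] Suc by (simp only: nat.case(2))
        have "cmod (- r k * coeff Q j + coeff Q j') \<le> cmod (- r k * coeff Q j) + cmod (coeff Q j')"
          by (rule norm_triangle_ineq)
        then show ?thesis unfolding e using t1 t2 by linarith
      qed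
      moreover have "(if j \<le> k then R * (2^k * R^(k-j)) else 0) \<le> 2^k * R^(k-j')"
      proof (cases "j \<le> k")
        case True
        then have "R * R^(k-j) = R^(k-j')" proof -
          have "k - j' = Suc (k - Suc j')" using True Suc by arith
          then show ?thesis using Suc True by simp
        qed
        then show ?thesis using True by (simp add: algebra_simps)
      next
        case False
        then have "j = Suc k" using j by simp
        then show ?thesis using assms(1) by simp
      qed
      moreover have "Suc k - j = k - j'" using Suc by simp
      ultimately show ?thesis by simp
    qed
  next
    fix j assume "j > Suc k"
    then show "coeff (\<Prod>i<Suc k. [:-r i, 1:]) j = 0" using cf[of j] IH
      by (cases j) auto
  qed
qed



lemma map_of_int_mult:
  "map_poly (of_int :: int \<Rightarrow> 'a::comm_ring_1) (p*q) = map_poly of_int p * map_poly of_int q"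
  by (rule poly_eqI) (simp add: coeff_map_poly coeff_mult)

definition Bset :: "nat \<Rightarrow> real \<Rightarrow> int poly set" where
  "Bset k R = {f. lead_coeff f = 1 \<and> degree f = k \<and>
     (\<forall>z. poly (map_poly complex_of_int f) z = 0 \<longrightarrow> cmod z \<le> R)}"

lemma coeff_bound_int:
  assumes "f \<in> Bset k R" "R \<ge> 0" "j \<le> k"
  shows "\<bar>real_of_int (coeff f j)\<bar> \<le> 2^k * R^(k-j)"
proof -
  define F where "F = map_poly complex_of_int f"
  have dF: "degree F = k" using assms(1) unfolding F_def Bset_def
    by (subst degree_map_poly) auto
  have lF: "lead_coeff F = 1" using assms(1) dF unfolding F_def Bset_def
    by (auto simp: coeff_map_poly)
  obtain root where rt: "smult (lead_coeff F) (\<Prod>i<degree F. [:-root i, 1:]) = F"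
    using complex_poly_decompose' by blast
  have Feq: "F = (\<Prod>i<k. [:-root i, 1:])" using rt lF dF by simp
  have "\<forall>i<k. cmod (root i) \<le> R"
  proof (intro allI impI)
    fix i assume "i < k"
    then have "poly F (root i) = 0" unfolding Feq poly_prod
      by (intro prod_zero) auto
    then show "cmod (root i) \<le> R" using assms(1) unfolding Bset_def F_def by auto
  qed
  from coeff_lin_prod_bound[OF assms(2) this] assms(3)
  have "cmod (coeff F j) \<le> 2^k * R^(k-j)" unfolding Feq by blast
  moreover have "coeff F j = of_int (coeff f j)" unfolding F_def by (simp add: coeff_map_poly)
  ultimately show ?thesis by (metis norm_of_int of_real_of_int_eq)
qed

lemma Bset_card:
  assumes R: "R \<ge> 1"
  shows "finite (Bset k R) \<and> real (card (Bset k R)) \<le> (3*2^k)^k * R^(\<Sum>j<k. k-j)"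
proof -
  define b where "b j = \<lfloor>2^k * R^(k-j)\<rfloor>" for j
  define T where "T = (\<Pi>\<^sub>E j\<in>{..<k}. {-b j..b j})"
  define g where "g f = restrict (coeff f) {..<k}" for f :: "int poly"
  have inj: "inj_on g (Bset k R)"
  proof (rule inj_onI)
    fix f1 f2 assume f1: "f1 \<in> Bset k R" and f2: "f2 \<in> Bset k R" and e: "g f1 = g f2"
    show "f1 = f2"
    proof (rule poly_eqI)
      fix i
      show "coeff f1 i = coeff f2 i"
      proof (cases "i < k")
        case True
        then show ?thesis using fun_cong[OF e, of i] unfolding g_def by simp
      next
        case False
        then show ?thesis using f1 f2 unfolding Bset_def
          by (cases "i = k") (auto simp: coeff_eq_0)
      qed
    qed
  qed
  have sub: "g ` Bset k R \<subseteq> T"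
  proof
    fix x assume "x \<in> g ` Bset k R"
    then obtain f where f: "f \<in> Bset k R" and x: "x = g f" by auto
    have "coeff f j \<in> {-b j..b j}" if "j < k" for j
    proof -
      have "\<bar>real_of_int (coeff f j)\<bar> \<le> 2^k * R^(k-j)"
        using coeff_bound_int[OF f, of j] R that by simp
      then show ?thesis unfolding b_def by (simp add: abs_le_iff le_floor_iff) linarith
    qed
    then show "x \<in> T" unfolding x g_def T_def by auto
  qed
  have finT: "finite T" unfolding T_def by (intro finite_PiE) auto
  have fin: "finite (Bset k R)" using inj_on_finite[OF inj sub finT] .
  have "card (Bset k R) \<le> card T" using card_inj_on_le[OF inj sub finT] .
  also have "card T = (\<Prod>j<k. nat (2 * b j + 1))" unfolding T_def
    by (subst card_PiE) (auto intro!: prod.cong)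
  finally have c1: "real (card (Bset k R)) \<le> (\<Prod>j<k. real (nat (2 * b j + 1)))"
    by (metis of_nat_le_iff of_nat_prod)
  also have "\<dots> \<le> (\<Prod>j<k. 3 * 2^k * R^(k-j))"
  proof (rule prod_mono)
    fix j assume "j \<in> {..<k}"
    have ge1: "2^k * R^(k-j) \<ge> (1::real)" using R
      by (meson one_le_numeral one_le_power mult_ge1_I)
    have b0: "b j \<ge> 0" unfolding b_def using ge1 by simp
    have "real_of_int (b j) \<le> 2^k * R^(k-j)" unfolding b_def by simp
    then show "0 \<le> real (nat (2 * b j + 1)) \<and> real (nat (2 * b j + 1)) \<le> 3 * 2^k * R^(k-j)"
      using b0 ge1 by simp
  qed
  also have "\<dots> = (3*2^k)^k * R^(\<Sum>j<k. k-j)"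
    by (simp add: prod.distrib power_sum)
  finally show ?thesis using fin by simp
qed



definition T :: "nat \<Rightarrow> nat" where "T k = (\<Sum>j<k. k-j)"

lemma T_Suc: "T (Suc k) = T k + Suc k"
  unfolding T_def by (subst sum.lessThan_Suc_shift) simp

lemma T_double: "2 * T k = k * (k+1)"
  by (induction k) (auto simp: T_Suc T_def[of 0] algebra_simps)

lemma T_add: "T (k + l) = T k + T l + k * l"
proof -
  have "2 * T (k+l) = 2 * (T k + T l + k * l)"
    unfolding add_mult_distrib2 T_double by (simp add: algebra_simps)
  then show ?thesis by simp
qed

lemma perron_sub_B: "perron_polys n R \<subseteq> Bset n R"
  unfolding perron_polys_def Bset_def by auto

lemma reducible_split:
  assumes p: "p \<in> Bset n R" and ni: "\<not> irreducible p" and n: "n \<ge> 1"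
  shows "\<exists>k\<in>{1..<n}. \<exists>f\<in>Bset k R. \<exists>g\<in>Bset (n-k) R. p = f*g"
proof -
  have lp: "lead_coeff p = 1" and dp: "degree p = n" using p unfolding Bset_def by auto
  have p0: "p \<noteq> 0" using lp by auto
  have nu: "\<not> p dvd 1"
  proof
    assume "p dvd 1"
    then obtain c where "p = [:c:]" using is_unit_poly_iff by blast
    then show False using dp n by auto
  qed
  obtain a b where ab: "p = a * b" and na: "\<not> a dvd 1" and nb: "\<not> b dvd 1"
    using ni p0 nu unfolding irreducible_def by blast
  have "lead_coeff a * lead_coeff b = 1" using lp ab by (simp add: lead_coeff_mult)
  then have u: "lead_coeff a = 1 \<and> lead_coeff b = 1 \<or> lead_coeff a = -1 \<and> lead_coeff b = -1"
    using zmult_eq_1_iff by blast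
  define u where "u = lead_coeff a"
  have uu: "u * u = 1" using u unfolding u_def by auto
  have u0: "u \<noteq> 0" using uu by auto
  define f where "f = smult u a"
  define g where "g = smult u b"
  have pfg: "p = f * g" unfolding f_def g_def ab by (simp add: uu mult.assoc)
  have a0: "a \<noteq> 0" and b0: "b \<noteq> 0" using ab p0 by auto
  have lf: "lead_coeff f = 1" unfolding f_def using uu a0 by (simp add: u_def)
  have lg: "lead_coeff g = 1" unfolding g_def using u by (auto simp: u_def)
  have da: "degree a \<ge> 1"
  proof (rule ccontr)
    assume "\<not> degree a \<ge> 1"
    then have "degree a = 0" by simp
    then have "a = [:u:]" unfolding u_def by (metis degree_eq_zeroE lead_coeff_pCons(2) pCons_0_0)
    then show False using na uu by (metis dvdI is_unit_poly_iff mult.commute)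
  qed
  have db: "degree b \<ge> 1"
  proof (rule ccontr)
    assume "\<not> degree b \<ge> 1"
    then have "degree b = 0" by simp
    then have "b = [:lead_coeff b:]" by (metis degree_eq_zeroE lead_coeff_pCons(2) pCons_0_0)
    moreover have "lead_coeff b dvd 1" using u by auto
    ultimately show False using nb by (metis is_unit_poly_iff)
  qed
  have dab: "degree a + degree b = n" using dp ab a0 b0 by (simp add: degree_mult_eq)
  have df: "degree f = degree a" and dg: "degree g = degree b"
    unfolding f_def g_def using u0 by auto
  have roots: "poly (map_poly complex_of_int p) z = poly (map_poly complex_of_int f) z * poly (map_poly complex_of_int g) z" for z
    unfolding pfg map_of_int_mult by simp
  have fB: "f \<in> Bset (degree a) R" unfolding Bset_def using lf df p roots
    unfolding Bset_def by auto
  have gB: "g \<in> Bset (n - degree a) R" unfolding Bset_def using lg dg dab p roots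
    unfolding Bset_def by auto
  show ?thesis using fB gB pfg da db dab by (intro bexI[of _ "degree a"]) auto
qed

lemma red_card:
  assumes R: "R \<ge> 1" and n: "n \<ge> 1"
  shows "real (card {p \<in> perron_polys n R. \<not> irreducible p})
     \<le> (\<Sum>k\<in>{1..<n}. (3*2^k)^k * (3*2^(n-k))^(n-k)) * R^(T n - 1)"
proof -
  define U where "U = (\<Union>k\<in>{1..<n}. (\<lambda>(f,g). f*g) ` (Bset k R \<times> Bset (n-k) R))"
  have sub: "{p \<in> perron_polys n R. \<not> irreducible p} \<subseteq> U"
  proof
    fix p assume "p \<in> {p \<in> perron_polys n R. \<not> irreducible p}"
    then have "p \<in> Bset n R" "\<not> irreducible p" using perron_sub_B by auto
    from reducible_split[OF this n] obtain k f g where "k \<in> {1..<n}" "f \<in> Bset k R" "g \<in> Bset (n-k) R" "p = f*g"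
      by blast
    then show "p \<in> U" unfolding U_def by force
  qed
  have finB: "finite (Bset k R)" for k using Bset_card[OF R] by blast
  have finU: "finite U" unfolding U_def using finB by auto
  have "card {p \<in> perron_polys n R. \<not> irreducible p} \<le> card U" using card_mono[OF finU sub] .
  also have "card U \<le> (\<Sum>k\<in>{1..<n}. card ((\<lambda>(f,g). f*g) ` (Bset k R \<times> Bset (n-k) R)))"
    unfolding U_def by (rule card_UN_le) simp
  also have "\<dots> \<le> (\<Sum>k\<in>{1..<n}. card (Bset k R) * card (Bset (n-k) R))"
    by (intro sum_mono) (metis card_image_le card_cartesian_product finB finite_cartesian_product)
  finally have c: "real (card {p \<in> perron_polys n R. \<not> irreducible p})
      \<le> (\<Sum>k\<in>{1..<n}. real (card (Bset k R)) * real (card (Bset (n-k) R)))"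
    by (metis (no_types, lifting) of_nat_le_iff of_nat_mult of_nat_sum sum.cong)
  also have "\<dots> \<le> (\<Sum>k\<in>{1..<n}. ((3*2^k)^k * (3*2^(n-k))^(n-k)) * R^(T n - 1))"
  proof (rule sum_mono)
    fix k assume k: "k \<in> {1..<n}"
    have e: "T k + T (n-k) \<le> T n - 1"
    proof -
      have "T n = T k + T (n-k) + k * (n-k)" using T_add[of k "n-k"] k by simp
      moreover have "k * (n-k) \<ge> 1" using k by (simp add: Suc_le_eq)
      ultimately show ?thesis by linarith
    qed
    have "real (card (Bset k R)) * real (card (Bset (n-k) R))
       \<le> ((3*2^k)^k * R^(T k)) * ((3*2^(n-k))^(n-k) * R^(T (n-k)))"
      using Bset_card[OF R, of k] Bset_card[OF R, of "n-k"] unfolding T_def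
      by (intro mult_mono) auto
    also have "\<dots> = ((3*2^k)^k * (3*2^(n-k))^(n-k)) * R^(T k + T (n-k))"
      by (simp add: power_add)
    also have "\<dots> \<le> ((3*2^k)^k * (3*2^(n-k))^(n-k)) * R^(T n - 1)"
      using e R by (intro mult_left_mono power_increasing) auto
    finally show "real (card (Bset k R)) * real (card (Bset (n-k) R))
       \<le> ((3*2^k)^k * (3*2^(n-k))^(n-k)) * R^(T n - 1)" .
  qed
  also have "\<dots> = (\<Sum>k\<in>{1..<n}. (3*2^k)^k * (3*2^(n-k))^(n-k)) * R^(T n - 1)"
    by (simp add: sum_distrib_right)
  finally show ?thesis .
qed



definition Pol :: "nat \<Rightarrow> int \<Rightarrow> (nat \<Rightarrow> int) \<Rightarrow> int poly" where
  "Pol m a c = Poly (map c [0..<Suc m] @ [-a, 1])"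

lemma coeff_Pol: "coeff (Pol m a c) i =
  (if i \<le> m then c i else if i = Suc m then -a else if i = Suc (Suc m) then 1 else 0)"
  unfolding Pol_def coeff_Poly_eq nth_default_def
  by (auto simp: nth_append not_less le_Suc_eq less_Suc_eq)

lemma degree_Pol: "degree (Pol m a c) = Suc (Suc m)"
proof (rule antisym)
  show "degree (Pol m a c) \<le> Suc (Suc m)"
    by (rule degree_le) (auto simp: coeff_Pol)
  show "Suc (Suc m) \<le> degree (Pol m a c)"
    by (rule le_degree) (simp add: coeff_Pol)
qed

lemma lead_Pol: "lead_coeff (Pol m a c) = 1"
  by (simp add: degree_Pol coeff_Pol)

lemma poly_sum_le:
  fixes z :: "'a::{comm_semiring_0,semiring_1}"
  assumes "degree p \<le> N"
  shows "poly p z = (\<Sum>i\<le>N. coeff p i * z^i)"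
  unfolding poly_altdef
  by (rule sum.mono_neutral_left) (use assms in \<open>auto simp: coeff_eq_0 not_le\<close>)

lemma poly_Pol:
  "poly (map_poly complex_of_int (Pol m a c)) z =
     z^Suc (Suc m) - of_int a * z^Suc m + (\<Sum>i\<le>m. of_int (c i) * z^i)"
proof -
  have d: "degree (map_poly complex_of_int (Pol m a c)) \<le> Suc (Suc m)"
    by (simp add: degree_map_poly degree_Pol)
  have "poly (map_poly complex_of_int (Pol m a c)) z =
      (\<Sum>i\<le>Suc (Suc m). of_int (coeff (Pol m a c) i) * z^i)"
    by (subst poly_sum_le[OF d]) (simp add: coeff_map_poly)
  also have "\<dots> = (\<Sum>i\<le>m. of_int (c i) * z^i) + (- of_int a * z^Suc m) + z^Suc (Suc m)"
    by (simp add: coeff_Pol)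
  finally show ?thesis by simp
qed

lemma zpderiv_Pol:
  "z * poly (pderiv (map_poly complex_of_int (Pol m a c))) z =
     of_nat (Suc (Suc m)) * z^Suc (Suc m) - of_nat (Suc m) * of_int a * z^Suc m
       + (\<Sum>i\<le>m. of_nat i * of_int (c i) * z^i)"
proof -
  define F where "F = map_poly complex_of_int (Pol m a c)"
  have cF: "coeff F i = of_int (coeff (Pol m a c) i)" for i unfolding F_def by (simp add: coeff_map_poly)
  have d: "degree (pderiv F) \<le> Suc (Suc m)"
    using degree_pderiv[of F] by (simp add: F_def degree_map_poly degree_Pol)
  have "z * poly (pderiv F) z = z * (\<Sum>i\<le>Suc (Suc m). coeff (pderiv F) i * z^i)"
    by (subst poly_sum_le[OF d]) simp
  also have "\<dots> = (\<Sum>i\<le>Suc (Suc m). of_nat (Suc i) * coeff F (Suc i) * z^(Suc i))"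
    by (simp add: sum_distrib_left coeff_pderiv algebra_simps)
  also have "\<dots> = (\<Sum>i\<le>Suc (Suc (Suc m)). of_nat i * coeff F i * z^i)"
    by (subst sum.atMost_Suc_shift) simp
  also have "\<dots> = (\<Sum>i\<le>m. of_nat i * of_int (c i) * z^i) + (- of_nat (Suc m) * of_int a * z^Suc m)
       + of_nat (Suc (Suc m)) * z^Suc (Suc m)"
    by (simp add: cF coeff_Pol algebra_simps)
  finally show ?thesis unfolding F_def by (simp add: algebra_simps)
qed



definition Kc :: "nat \<Rightarrow> real" where "Kc m = 8 * (real m + 2)^2 * 8^(m+2)"

definition good :: "nat \<Rightarrow> real \<Rightarrow> (nat \<Rightarrow> real) \<Rightarrow> bool" where
  "good m a c \<longleftrightarrow> a > 0 \<and> (\<forall>i\<le>m. \<bar>c i\<bar> \<le> a^(Suc (Suc m) - i) / Kc m)"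

lemma Kc_pos: "Kc m > 0" unfolding Kc_def by simp

lemma Kc_big: "128 * ((real m + 1)^2 * 2^(m+2)) \<le> Kc m"
proof -
  have "(8::real)^(m+2) = 2^(m+2) * 4^(m+2)"
    by (metis mult.commute num_double numeral_times_numeral power_mult_distrib)
  moreover have "(4::real)^(m+2) \<ge> 16" 
  proof -
    have "(4::real)^(m+2) = 16 * 4^m" by (simp add: power_add)
    moreover have "(4::real)^m \<ge> 1" by simp
    ultimately show ?thesis by linarith
  qed
  moreover have "(real m + 1)^2 \<le> (real m + 2)^2" by (simp add: power_mono)
  ultimately have "Kc m \<ge> 8 * (real m + 1)^2 * (2^(m+2) * 16)"
    unfolding Kc_def by (intro mult_mono) auto
  then show ?thesis by (simp add: power_add algebra_simps)
qed

lemma tb1: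
  assumes g: "good m a c" and r: "r \<ge> a/2" and i: "i \<le> m"
  shows "\<bar>c i\<bar> * r^i \<le> a * 2^(m+2) * r^(m+1) / Kc m"
proof -
  have a: "a > 0" and ci: "\<bar>c i\<bar> \<le> a^(Suc (Suc m) - i) / Kc m" using g i unfolding good_def by auto
  have r0: "r \<ge> 0" using a r by simp
  have e: "Suc (Suc m) - i = Suc (Suc m - i)" using i by simp
  have "a^(Suc m - i) \<le> (2*r)^(Suc m - i)" using a r by (intro power_mono) auto
  then have h: "a^(Suc m - i) * r^i \<le> (2*r)^(Suc m - i) * r^i"
    by (rule mult_right_mono) (use r0 in auto)
  have "a^(Suc (Suc m) - i) * r^i = a * (a^(Suc m - i) * r^i)" unfolding e by simp
  also have "\<dots> \<le> a * ((2*r)^(Suc m - i) * r^i)" using h a by (intro mult_left_mono) auto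
  finally have "a^(Suc (Suc m) - i) * r^i \<le> a * ((2*r)^(Suc m - i) * r^i)" .
  also have "(2*r)^(Suc m - i) * r^i = 2^(Suc m - i) * r^(m+1)"
  proof -
    have "(2*r)^(Suc m - i) * r^i = 2^(Suc m - i) * (r^(Suc m - i) * r^i)"
      by (simp add: power_mult_distrib)
    also have "r^(Suc m - i) * r^i = r^(m+1)" using i by (simp flip: power_add)
    finally show ?thesis .
  qed
  also have "a * (2^(Suc m - i) * r^(m+1)) \<le> a * (2^(m+2) * r^(m+1))"
    using a r0 by (intro mult_left_mono mult_right_mono power_increasing) auto
  finally have "a^(Suc (Suc m) - i) * r^i \<le> a * 2^(m+2) * r^(m+1)" by (simp add: mult.assoc)
  moreover have "\<bar>c i\<bar> * r^i \<le> a^(Suc (Suc m) - i) / Kc m * r^i"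
    using ci r0 by (intro mult_right_mono) auto
  ultimately show ?thesis using Kc_pos[of m]
    by (smt (verit) divide_right_mono mult.commute times_divide_eq_right)
qed

lemma sum_tb:
  assumes g: "good m a c" and r: "r \<ge> a/2"
  shows "(\<Sum>i\<le>m. \<bar>c i\<bar> * r^i) \<le> (real m + 1) * (a * 2^(m+2) * r^(m+1) / Kc m)"
proof -
  have "(\<Sum>i\<le>m. \<bar>c i\<bar> * r^i) \<le> (\<Sum>i\<le>m. a * 2^(m+2) * r^(m+1) / Kc m)"
    using tb1[OF g r] by (intro sum_mono) auto
  then show ?thesis by (simp add: add.commute)
qed

lemma sum_tb_small:
  assumes g: "good m a c" and r: "r \<ge> a/2"
  shows "(real m + 1) * (\<Sum>i\<le>m. \<bar>c i\<bar> * r^i) \<le> a * r^(m+1) / 128"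
proof -
  have a: "a > 0" using g unfolding good_def by auto
  have r0: "r > 0" using a r by simp
  have "(real m + 1) * (\<Sum>i\<le>m. \<bar>c i\<bar> * r^i) \<le> (real m + 1) * ((real m + 1) * (a * 2^(m+2) * r^(m+1) / Kc m))"
    using sum_tb[OF g r] by (intro mult_left_mono) auto
  also have "\<dots> = ((real m + 1)^2 * 2^(m+2)) / Kc m * (a * r^(m+1))"
    by (simp add: power2_eq_square)
  also have "\<dots> \<le> (1/128) * (a * r^(m+1))"
  proof -
    have "((real m + 1)^2 * 2^(m+2)) / Kc m \<le> 1/128"
      using Kc_big[of m] Kc_pos[of m] by (simp add: divide_simps)
    then show ?thesis using a r0 by (intro mult_right_mono) auto
  qed
  finally show ?thesis by simp
qed



definition PP :: "nat \<Rightarrow> real \<Rightarrow> (nat \<Rightarrow> real) \<Rightarrow> 'a::real_normed_field \<Rightarrow> 'a" where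
  "PP m a c z = z^Suc (Suc m) - of_real a * z^Suc m + (\<Sum>i\<le>m. of_real (c i) * z^i)"

lemma norm_S:
  fixes z :: "'a::real_normed_field"
  shows "norm (\<Sum>i\<le>m. of_real (c i) * z^i) \<le> (\<Sum>i\<le>m. \<bar>c i\<bar> * norm z^i)"
  by (rule order.trans[OF norm_sum]) (simp add: norm_mult norm_power)

lemma S_small:
  fixes z :: "'a::real_normed_field"
  assumes g: "good m a c" and r: "norm z \<ge> a/2"
  shows "norm (\<Sum>i\<le>m. of_real (c i) * z^i) \<le> a * norm z^(m+1) / 128"
proof -
  have "(\<Sum>i\<le>m. \<bar>c i\<bar> * norm z^i) \<le> (real m + 1) * (\<Sum>i\<le>m. \<bar>c i\<bar> * norm z^i)"
  proof -
    have "0 \<le> (\<Sum>i\<le>m. \<bar>c i\<bar> * norm z^i)" by (intro sum_nonneg) auto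
    then show ?thesis by (simp add: algebra_simps)
  qed
  then show ?thesis using norm_S[of c z m] sum_tb_small[OF g r] by linarith
qed

lemma PP_cont: "continuous_on S (PP m a c :: real \<Rightarrow> real)"
  unfolding PP_def by (intro continuous_intros)

lemma PP_real_root:
  assumes g: "good m a c"
  shows "\<exists>l::real. 7*a/8 \<le> l \<and> l \<le> 9*a/8 \<and> PP m a c l = 0"
proof -
  have a: "a > 0" using g unfolding good_def by auto
  define x0 where "x0 = 7*a/8"
  define x1 where "x1 = 9*a/8"
  have x0: "x0 > 0" "x0 \<ge> a/2" and x1: "x1 > 0" "x1 \<ge> a/2" using a unfolding x0_def x1_def by auto
  have s0: "\<bar>(\<Sum>i\<le>m. c i * x0^i)\<bar> \<le> a * x0^(m+1) / 128"
    using S_small[OF g, of x0] x0 by simp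
  have s1: "\<bar>(\<Sum>i\<le>m. c i * x1^i)\<bar> \<le> a * x1^(m+1) / 128"
    using S_small[OF g, of x1] x1 by simp
  have p0: "PP m a c x0 = x0^(m+1) * (x0 - a) + (\<Sum>i\<le>m. c i * x0^i)"
    unfolding PP_def by (simp add: algebra_simps)
  have p1: "PP m a c x1 = x1^(m+1) * (x1 - a) + (\<Sum>i\<le>m. c i * x1^i)"
    unfolding PP_def by (simp add: algebra_simps)
  have "x0^(m+1) * (x0 - a) = - (a * x0^(m+1) / 8)" unfolding x0_def by (simp add: algebra_simps)
  moreover have "a * x0^(m+1) > 0" using a x0 by simp
  ultimately have n0: "PP m a c x0 \<le> 0" using p0 s0 by linarith
  have "x1^(m+1) * (x1 - a) = a * x1^(m+1) / 8" unfolding x1_def by (simp add: algebra_simps)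
  moreover have "a * x1^(m+1) > 0" using a x1 by simp
  ultimately have n1: "PP m a c x1 \<ge> 0" using p1 s1 by linarith
  have "x0 \<le> x1" using a unfolding x0_def x1_def by simp
  from IVT'[of "PP m a c" x0 0 x1, OF n0 n1 this PP_cont]
  show ?thesis unfolding x0_def x1_def by auto
qed

lemma PP_factor:
  fixes z :: "'a::real_normed_field"
  assumes "z \<noteq> 0"
  shows "PP m a c z = z^Suc m * (z - of_real a + (\<Sum>i\<le>m. of_real (c i) * inverse z ^ (Suc m - i)))"
proof -
  have "z^Suc m * (of_real (c i) * inverse z ^ (Suc m - i)) = of_real (c i) * z^i" if "i \<le> m" for i
  proof -
    have "z^Suc m = z^i * z^(Suc m - i)" using that by (simp flip: power_add)
    then have "z^Suc m * inverse z ^ (Suc m - i) = z^i"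
      using assms by (simp add: power_inverse field_simps)
    then show ?thesis by (simp add: algebra_simps)
  qed
  then have "z^Suc m * (\<Sum>i\<le>m. of_real (c i) * inverse z ^ (Suc m - i)) = (\<Sum>i\<le>m. of_real (c i) * z^i)"
    unfolding sum_distrib_left by (intro sum.cong) auto
  then show ?thesis unfolding PP_def by (simp add: algebra_simps)
qed

lemma pow_diff_bound:
  fixes u v :: "'a::real_normed_field"
  assumes "norm u \<le> M" "norm v \<le> M"
  shows "norm (u^e - v^e) \<le> real e * norm (u - v) * M^(e - 1)"
proof -
  have M: "M \<ge> 0" using assms(1) norm_ge_zero order_trans by blast
  have "norm (\<Sum>i<e. v^(e - Suc i) * u^i) \<le> (\<Sum>i<e. M^(e - 1))"
  proof (rule order.trans[OF norm_sum], rule sum_mono)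
    fix i assume i: "i \<in> {..<e}"
    have "norm (v^(e - Suc i) * u^i) \<le> M^(e - Suc i) * M^i"
      unfolding norm_mult norm_power using assms M by (intro mult_mono power_mono) auto
    also have "\<dots> = M^(e-1)" using i by (simp flip: power_add)
    finally show "norm (v^(e - Suc i) * u^i) \<le> M^(e - 1)" .
  qed
  then have "norm (\<Sum>i<e. v^(e - Suc i) * u^i) \<le> real e * M^(e-1)" by simp
  then show ?thesis unfolding power_diff_sumr2[of u e v] norm_mult
    by (metis mult.assoc mult.left_commute mult_left_mono norm_ge_zero)
qed



lemma key_id:
  assumes a: "(a::real) > 0" and e: "e \<ge> 1"
  shows "a^(Suc e) * (4/a^2) * (2/a)^(e-1) = 2^(Suc e)"
proof -
  obtain d where d: "e = Suc d" using e by (cases e) auto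
  have "(2/a)^d * a^d = 2^d" using a by (simp add: power_divide)
  moreover have "a^(Suc e) = a^2 * a^d" using d by (simp add: power2_eq_square)
  ultimately show ?thesis using a d by (simp add: field_simps power2_eq_square)
qed

lemma PP_unique:
  fixes z1 z2 :: "'a::real_normed_field"
  assumes g: "good m a c" and r1: "PP m a c z1 = 0" and r2: "PP m a c z2 = 0"
    and n1: "norm z1 \<ge> a/2" and n2: "norm z2 \<ge> a/2"
  shows "z1 = z2"
proof -
  have a: "a > 0" and ci: "\<And>i. i \<le> m \<Longrightarrow> \<bar>c i\<bar> \<le> a^(Suc (Suc m) - i) / Kc m"
    using g unfolding good_def by auto
  have z1: "z1 \<noteq> 0" and z2: "z2 \<noteq> 0" using a n1 n2 by auto
  define w1 where "w1 = inverse z1"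
  define w2 where "w2 = inverse z2"
  define S where "S w = (\<Sum>i\<le>m. of_real (c i) * w ^ (Suc m - i))" for w :: 'a
  have e1: "z1 - of_real a + S w1 = 0" using PP_factor[OF z1, of m a c] r1 z1 unfolding S_def w1_def by simp
  have e2: "z2 - of_real a + S w2 = 0" using PP_factor[OF z2, of m a c] r2 z2 unfolding S_def w2_def by simp
  have dz: "z1 - z2 = (\<Sum>i\<le>m. of_real (c i) * (w2 ^ (Suc m - i) - w1 ^ (Suc m - i)))"
  proof -
    have "z1 - z2 = S w2 - S w1" using e1 e2 by (simp add: algebra_simps)
    then show ?thesis unfolding S_def by (simp add: sum_subtractf algebra_simps)
  qed
  define d where "d = norm (z1 - z2)"
  have nw1: "norm w1 \<le> 2/a"
  proof -
    have "norm w1 = 1 / norm z1" unfolding w1_def by (simp add: norm_inverse divide_inverse)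
    also have "\<dots> \<le> 1 / (a/2)" using n1 a z1 by (intro divide_left_mono) auto
    finally show ?thesis by simp
  qed
  have nw2: "norm w2 \<le> 2/a"
  proof -
    have "norm w2 = 1 / norm z2" unfolding w2_def by (simp add: norm_inverse divide_inverse)
    also have "\<dots> \<le> 1 / (a/2)" using n2 a z2 by (intro divide_left_mono) auto
    finally show ?thesis by simp
  qed
  have dw: "norm (w2 - w1) \<le> 4/a^2 * d"
  proof -
    have "w2 - w1 = (z1 - z2) / (z1 * z2)" unfolding w1_def w2_def using z1 z2
      by (simp add: field_simps)
    then have "norm (w2 - w1) = d / (norm z1 * norm z2)" unfolding d_def by (simp add: norm_divide norm_mult)
    also have "\<dots> \<le> d / (a/2 * (a/2))"
      using a n1 n2 z1 z2 unfolding d_def by (intro divide_left_mono mult_mono) auto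
    also have "\<dots> = 4/a^2 * d" by (simp add: power2_eq_square field_simps)
    finally show ?thesis .
  qed
  have termb: "norm (of_real (c i) * (w2 ^ (Suc m - i) - w1 ^ (Suc m - i))) \<le> (real m + 1) * 2^(m+2) * d / Kc m"
    if i: "i \<le> m" for i
  proof -
    define e where "e = Suc m - i"
    have e1: "e \<ge> 1" "e \<le> m + 1" "Suc e = Suc (Suc m) - i" using i unfolding e_def by auto
    have "norm (w2^e - w1^e) \<le> real e * norm (w2 - w1) * (2/a)^(e - 1)"
      by (rule pow_diff_bound[OF nw2 nw1])
    also have "\<dots> \<le> real e * (4/a^2 * d) * (2/a)^(e - 1)"
      using dw a unfolding d_def by (intro mult_mono) auto
    finally have h1: "norm (w2^e - w1^e) \<le> real e * (4/a^2 * d) * (2/a)^(e - 1)" .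
    have "norm (of_real (c i) * (w2^e - w1^e)) = \<bar>c i\<bar> * norm (w2^e - w1^e)"
      by (simp add: norm_mult)
    also have "\<dots> \<le> a^(Suc e) / Kc m * (real e * (4/a^2 * d) * (2/a)^(e - 1))"
      using ci[OF i] h1 e1 by (intro mult_mono) auto
    also have "\<dots> = real e * d * (a^(Suc e) * (4/a^2) * (2/a)^(e-1)) / Kc m"
      by (simp add: field_simps)
    also have "\<dots> = real e * d * 2^(Suc e) / Kc m" using key_id[OF a e1(1)] by simp
    also have "\<dots> \<le> (real m + 1) * d * 2^(m+2) / Kc m"
    proof -
      have "real e * 2^(Suc e) \<le> (real m + 1) * 2^(m+2)"
        using e1 by (intro mult_mono power_increasing) auto
      then have "(real e * 2^(Suc e)) * d \<le> ((real m + 1) * 2^(m+2)) * d"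
        unfolding d_def by (intro mult_right_mono) auto
      then have "real e * d * 2^(Suc e) \<le> (real m + 1) * d * 2^(m+2)"
        by (simp only: ac_simps)
      then show ?thesis using Kc_pos[of m] by (simp add: divide_right_mono)
    qed
    finally show ?thesis unfolding e_def by (simp add: algebra_simps)
  qed
  have "d \<le> (\<Sum>i\<le>m. norm (of_real (c i) * (w2 ^ (Suc m - i) - w1 ^ (Suc m - i))))"
    unfolding d_def dz by (rule norm_sum)
  also have "\<dots> \<le> (\<Sum>i\<le>m. (real m + 1) * 2^(m+2) * d / Kc m)"
    using termb by (intro sum_mono) auto
  also have "\<dots> = ((real m + 1)^2 * 2^(m+2)) / Kc m * d"
    by (simp add: power2_eq_square algebra_simps)
  also have "\<dots> \<le> (1/128) * d"
  proof -
    have "((real m + 1)^2 * 2^(m+2)) / Kc m \<le> 1/128"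
      using Kc_big[of m] Kc_pos[of m] by (simp add: divide_simps)
    then show ?thesis unfolding d_def by (intro mult_right_mono) auto
  qed
  finally have "d = 0" unfolding d_def by simp
  then show ?thesis unfolding d_def by simp
qed

lemma PP_deriv_nz:
  fixes z :: "'a::real_normed_field"
  assumes g: "good m a c" and r: "PP m a c z = 0" and n: "norm z \<ge> a/2"
  shows "of_nat (Suc (Suc m)) * z^Suc (Suc m) - of_nat (Suc m) * of_real a * z^Suc m
       + (\<Sum>i\<le>m. of_nat i * of_real (c i) * z^i) \<noteq> 0"
proof -
  have a: "a > 0" using g unfolding good_def by auto
  define rr where "rr = norm z"
  have rr: "rr > 0" "a \<le> 2 * rr" using a n unfolding rr_def by auto
  define T where "T = (\<Sum>i\<le>m. (of_nat i - of_nat (Suc m)) * of_real (c i) * z^i)"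
  have eq: "of_nat (Suc (Suc m)) * z^Suc (Suc m) - of_nat (Suc m) * of_real a * z^Suc m
       + (\<Sum>i\<le>m. of_nat i * of_real (c i) * z^i) = z^Suc (Suc m) + T + of_nat (Suc m) * PP m a c z"
    unfolding T_def PP_def by (simp add: algebra_simps sum_distrib_left sum.distrib sum_subtractf)
  have "norm T \<le> (\<Sum>i\<le>m. (real m + 1) * (\<bar>c i\<bar> * rr^i))"
    unfolding T_def
  proof (rule order.trans[OF norm_sum], rule sum_mono)
    fix i assume i: "i \<in> {..m}"
    have "norm (of_nat i - of_nat (Suc m) :: 'a) = real (Suc m - i)"
    proof -
      have "(of_nat i - of_nat (Suc m) :: 'a) = - of_nat (Suc m - i)" using i by (simp add: of_nat_diff)
      then show ?thesis by (simp only: norm_minus_cancel norm_of_nat)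
    qed
    moreover have "real (Suc m - i) \<le> real m + 1" by simp
    ultimately show "norm ((of_nat i - of_nat (Suc m)) * of_real (c i) * z^i) \<le> (real m + 1) * (\<bar>c i\<bar> * rr^i)"
      unfolding rr_def by (simp add: norm_mult norm_power mult_right_mono mult.assoc)
  qed
  also have "\<dots> = (real m + 1) * (\<Sum>i\<le>m. \<bar>c i\<bar> * rr^i)" by (simp add: sum_distrib_left)
  also have "\<dots> \<le> a * rr^(m+1) / 128" using sum_tb_small[OF g] n unfolding rr_def by simp
  also have "\<dots> \<le> 2 * rr * rr^(m+1) / 128" using rr by (intro divide_right_mono mult_right_mono) auto
  also have "\<dots> < rr^Suc (Suc m)" using rr by simp
  finally have "norm T < norm (z^Suc (Suc m))" unfolding rr_def by (simp add: norm_power norm_mult)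
  then have "z^Suc (Suc m) + T \<noteq> 0"
    by (metis add.commute add_eq_0_iff norm_minus_cancel order_less_irrefl)
  then show ?thesis unfolding eq using r by simp
qed



lemma poly_Pol_PP:
  "poly (map_poly complex_of_int (Pol m a c)) z = PP m (real_of_int a) (\<lambda>i. real_of_int (c i)) z"
  unfolding poly_Pol PP_def by simp

lemma zpderiv_Pol':
  "z * poly (pderiv (map_poly complex_of_int (Pol m a c))) z =
     of_nat (Suc (Suc m)) * z^Suc (Suc m) - of_nat (Suc m) * of_real (real_of_int a) * z^Suc m
       + (\<Sum>i\<le>m. of_nat i * of_real (real_of_int (c i)) * z^i)"
  unfolding zpderiv_Pol by simp

lemma PP_of_real: "PP m a c (complex_of_real x) = complex_of_real (PP m a c x)"
  unfolding PP_def by simp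

lemma Pol_perron:
  fixes a :: int
  assumes a2: "a \<ge> 2" and aR: "real_of_int a \<le> R/2"
    and g: "good m (real_of_int a) (\<lambda>i. real_of_int (c i))"
  shows "Pol m a c \<in> perron_polys (Suc (Suc m)) R"
proof -
  define ar where "ar = real_of_int a"
  define cr where "cr = (\<lambda>i. real_of_int (c i))"
  define F where "F = map_poly complex_of_int (Pol m a c)"
  have g': "good m ar cr" using g unfolding ar_def cr_def .
  have ar2: "ar \<ge> 2" using a2 unfolding ar_def by simp
  have pF: "poly F z = PP m ar cr z" for z unfolding F_def ar_def cr_def by (rule poly_Pol_PP)
  obtain l where l: "7*ar/8 \<le> l" "l \<le> 9*ar/8" "PP m ar cr l = 0" using PP_real_root[OF g'] by blast
  define L where "L = complex_of_real l"
  have l1: "l > 1" using l ar2 by simp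
  have rootL: "poly F L = 0" unfolding pF L_def PP_of_real l(3) by simp
  have nL: "norm L \<ge> ar/2" unfolding L_def using l ar2 by simp
  have F0: "F \<noteq> 0"
  proof
    assume "F = 0"
    then have "degree F = 0" by simp
    then show False unfolding F_def by (simp add: degree_map_poly degree_Pol)
  qed
  have "L * poly (pderiv F) L \<noteq> 0"
    unfolding F_def zpderiv_Pol' using PP_deriv_nz[OF g'] rootL nL unfolding pF ar_def cr_def by blast
  then have "poly (pderiv F) L \<noteq> 0" by auto
  then have "order L (pderiv F) = 0" using order_root by blast
  then have ord: "order L F = 1" using order_pderiv[OF F0 rootL] by simp
  have big: "z = L" if "poly F z = 0" "norm z \<ge> ar/2" for z
    using PP_unique[OF g', of z L] that rootL nL unfolding pF by blast
  have others: "cmod z < l" if "poly F z = 0" "z \<noteq> L" for z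
  proof -
    have "norm z < ar/2" using big that by force
    then show ?thesis using l ar2 by simp
  qed
  have allR: "cmod z \<le> R" if "poly F z = 0" for z
  proof (cases "norm z \<ge> ar/2")
    case True
    then have "z = L" using big that by blast
    then show ?thesis unfolding L_def using l aR ar2 unfolding ar_def by simp
  next
    case False
    then show ?thesis using aR ar2 unfolding ar_def by simp
  qed
  show ?thesis unfolding perron_polys_def
    using lead_Pol[of m a c] degree_Pol[of m a c] l1 rootL ord others allR
    unfolding F_def L_def by blast
qed



lemma nat_floor_bound:
  assumes "x \<ge> (0::real)"
  shows "real (nat (2 * \<lfloor>x\<rfloor> + 1)) \<ge> x"
proof (cases "x \<ge> 1")
  case True
  have h: "real_of_int \<lfloor>x\<rfloor> > x - 1" by linarith
  have "\<lfloor>x\<rfloor> \<ge> 0" using assms by simp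
  then have "real (nat (2 * \<lfloor>x\<rfloor> + 1)) = 2 * real_of_int \<lfloor>x\<rfloor> + 1" by simp
  then show ?thesis using h True by linarith
next
  case False
  have h: "\<lfloor>x\<rfloor> \<ge> 0" using assms by simp
  then have "real (nat (2 * \<lfloor>x\<rfloor> + 1)) = 2 * real_of_int \<lfloor>x\<rfloor> + 1" by simp
  moreover have "real_of_int \<lfloor>x\<rfloor> \<ge> 0" using h by simp
  ultimately show ?thesis using False by linarith
qed

lemma card_A:
  assumes "R \<ge> 8"
  shows "real (card {a::int. R/4 \<le> real_of_int a \<and> real_of_int a \<le> R/2}) \<ge> R/8"
proof -
  have e: "{a::int. R/4 \<le> real_of_int a \<and> real_of_int a \<le> R/2} = {\<lceil>R/4\<rceil>..\<lfloor>R/2\<rfloor>}"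
    by (auto simp: ceiling_le_iff le_floor_iff)
  have h1: "real_of_int \<lfloor>R/2\<rfloor> \<ge> R/2 - 1" and h2: "real_of_int \<lceil>R/4\<rceil> \<le> R/4 + 1" by linarith+
  have "\<lfloor>R/2\<rfloor> - \<lceil>R/4\<rceil> + 1 \<ge> 0" using assms by linarith
  then have h3: "real (nat (\<lfloor>R/2\<rfloor> - \<lceil>R/4\<rceil> + 1)) = real_of_int \<lfloor>R/2\<rfloor> - real_of_int \<lceil>R/4\<rceil> + 1" by simp
  show ?thesis unfolding e card_atLeastAtMost_int h3 using assms h1 h2 by linarith
qed

lemma T_SS: "T (Suc (Suc m)) = (\<Sum>i\<le>m. Suc (Suc m) - i) + 1"
  unfolding T_def by (simp add: lessThan_Suc_atMost[symmetric])

lemma perron_lower: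
  assumes R: "R \<ge> 16"
  shows "real (card (perron_polys (Suc (Suc m)) R))
     \<ge> R / 8 * ((R/4)^(\<Sum>i\<le>m. Suc (Suc m) - i) / Kc m^(m+1))"
proof -
  define A where "A = {a::int. R/4 \<le> real_of_int a \<and> real_of_int a \<le> R/2}"
  define b where "b a i = \<lfloor>real_of_int a^(Suc (Suc m) - i) / Kc m\<rfloor>" for a :: int and i
  define S where "S = (SIGMA a:A. \<Pi>\<^sub>E i\<in>{..m}. {-b a i..b a i})"
  define phi where "phi = (\<lambda>(a, c). Pol m a c)"
  have finA: "finite A" unfolding A_def
  proof -
    have "{a::int. R/4 \<le> real_of_int a \<and> real_of_int a \<le> R/2} \<subseteq> {\<lceil>R/4\<rceil>..\<lfloor>R/2\<rfloor>}"
      by (auto simp: ceiling_le_iff le_floor_iff)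
    then show "finite {a::int. R/4 \<le> real_of_int a \<and> real_of_int a \<le> R/2}"
      using finite_subset by blast
  qed
  have inj: "inj_on phi S"
  proof (rule inj_onI)
    fix x y assume x: "x \<in> S" and y: "y \<in> S" and e: "phi x = phi y"
    obtain a c where xac: "x = (a, c)" by (cases x)
    obtain a' c' where yac: "y = (a', c')" by (cases y)
    have P: "Pol m a c = Pol m a' c'" using e unfolding xac yac phi_def by simp
    have "a = a'" using arg_cong[OF P, of "\<lambda>p. coeff p (Suc m)"] by (simp add: coeff_Pol)
    moreover have "c = c'"
    proof
      fix i
      show "c i = c' i"
      proof (cases "i \<le> m")
        case True
        then show ?thesis using arg_cong[OF P, of "\<lambda>p. coeff p i"] by (simp add: coeff_Pol)
      next
        case False
        then have "c i = undefined" "c' i = undefined" using x y unfolding xac yac S_def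
          by (auto simp: PiE_def extensional_def)
        then show ?thesis by simp
      qed
    qed
    ultimately show "x = y" unfolding xac yac by simp
  qed
  have sub: "phi ` S \<subseteq> perron_polys (Suc (Suc m)) R"
  proof
    fix p assume "p \<in> phi ` S"
    then obtain a c where ac: "(a, c) \<in> S" "p = Pol m a c" unfolding phi_def by auto
    have aA: "R/4 \<le> real_of_int a" "real_of_int a \<le> R/2" using ac(1) unfolding S_def A_def by auto
    have a2: "a \<ge> 2" using aA R by linarith
    have "good m (real_of_int a) (\<lambda>i. real_of_int (c i))"
      unfolding good_def
    proof (intro conjI allI impI)
      show "real_of_int a > 0" using a2 by simp
      fix i assume i: "i \<le> m"
      have "c i \<in> {-b a i..b a i}" using ac(1) i unfolding S_def by auto
      then have "\<bar>c i\<bar> \<le> b a i" by auto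
      then show "\<bar>real_of_int (c i)\<bar> \<le> real_of_int a^(Suc (Suc m) - i) / Kc m"
        unfolding b_def by linarith
    qed
    then show "p \<in> perron_polys (Suc (Suc m)) R" using Pol_perron[OF a2 aA(2)] ac(2) by simp
  qed
  have finP: "finite (perron_polys (Suc (Suc m)) R)"
    using Bset_card[of R] R perron_sub_B finite_subset by (metis dual_order.trans one_le_numeral)
  have "card S = card (phi ` S)" using card_image[OF inj] by simp
  also have "\<dots> \<le> card (perron_polys (Suc (Suc m)) R)" using card_mono[OF finP sub] .
  finally have c1: "real (card S) \<le> real (card (perron_polys (Suc (Suc m)) R))" by simp
  have "card S = (\<Sum>a\<in>A. \<Prod>i\<le>m. nat (2 * b a i + 1))"
    unfolding S_def using finA
    by (subst card_SigmaI) (auto simp: card_PiE finite_PiE intro!: sum.cong prod.cong)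
  then have cS: "real (card S) = (\<Sum>a\<in>A. \<Prod>i\<le>m. real (nat (2 * b a i + 1)))" by simp
  define P0 where "P0 = (\<Prod>i\<le>m. (R/4)^(Suc (Suc m) - i) / Kc m)"
  have "(\<Sum>a\<in>A. P0) \<le> (\<Sum>a\<in>A. \<Prod>i\<le>m. real (nat (2 * b a i + 1)))"
  proof (rule sum_mono)
    fix a assume aA: "a \<in> A"
    have a0: "R/4 \<le> real_of_int a" using aA unfolding A_def by auto
    show "P0 \<le> (\<Prod>i\<le>m. real (nat (2 * b a i + 1)))" unfolding P0_def
    proof (rule prod_mono, intro conjI)
      fix i assume "i \<in> {..m}"
      show "0 \<le> (R/4)^(Suc (Suc m) - i) / Kc m" using R Kc_pos[of m] by simp
      have "(R/4)^(Suc (Suc m) - i) / Kc m \<le> real_of_int a^(Suc (Suc m) - i) / Kc m"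
        using a0 R Kc_pos[of m] by (intro divide_right_mono power_mono) auto
      also have "\<dots> \<le> real (nat (2 * b a i + 1))" unfolding b_def
        by (rule nat_floor_bound) (use a0 R Kc_pos[of m] in auto)
      finally show "(R/4)^(Suc (Suc m) - i) / Kc m \<le> real (nat (2 * b a i + 1))" .
    qed
  qed
  then have "real (card A) * P0 \<le> real (card S)" unfolding cS by simp
  moreover have "R/8 * P0 \<le> real (card A) * P0"
    using card_A[of R] R unfolding A_def P0_def
    by (intro mult_right_mono prod_nonneg) (auto intro!: divide_nonneg_pos simp: Kc_pos)
  moreover have "P0 = (R/4)^(\<Sum>i\<le>m. Suc (Suc m) - i) / Kc m^(m+1)"
    unfolding P0_def by (simp add: prod_dividef power_sum)
  ultimately show ?thesis using c1 by simp
qed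



theorem lemma7:
  fixes n :: nat
  assumes "n \<ge> 1"
  shows "((\<lambda>R. real (card {p \<in> perron_polys n R. \<not> irreducible p}) / real (card (perron_polys n R)))
           \<longlongrightarrow> 0) at_top"
proof (cases "n = 1")
  case True
  have "eventually (\<lambda>R. real (card {p \<in> perron_polys n R. \<not> irreducible p}) / real (card (perron_polys n R)) = 0) at_top"
    using eventually_ge_at_top[of "1::real"]
  proof eventually_elim
    case (elim R)
    have "real (card {p \<in> perron_polys n R. \<not> irreducible p}) \<le> 0"
      using red_card[OF elim assms] True by simp
    then show ?case by simp
  qed
  then show ?thesis by (rule tendsto_eventually)
next
  case False
  then obtain m where n: "n = Suc (Suc m)" using assms by (metis One_nat_def Suc_le_D le_antisym nat.exhaust not_less_eq_eq)
  define Tm where "Tm = (\<Sum>i\<le>m. Suc (Suc m) - i)"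
  define C where "C = (\<Sum>k\<in>{1..<n}. (3*2^k)^k * (3*2^(n-k))^(n-k) :: real)"
  define c0 where "c0 = 1 / (8 * 4^Tm * Kc m^(m+1))"
  have c0: "c0 > 0" unfolding c0_def using Kc_pos[of m] by simp
  have C0: "C \<ge> 0" unfolding C_def by (intro sum_nonneg) auto
  have TT: "T n - 1 = Tm" unfolding n T_SS Tm_def by simp
  let ?f = "\<lambda>R. real (card {p \<in> perron_polys n R. \<not> irreducible p}) / real (card (perron_polys n R))"
  have ev1: "eventually (\<lambda>R. 0 \<le> ?f R) at_top" by simp
  have ev2: "eventually (\<lambda>R. ?f R \<le> (C / c0) / R) at_top"
    using eventually_ge_at_top[of "16::real"]
  proof eventually_elim
    case (elim R)
    have R1: "R \<ge> 1" using elim by simp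
    have num: "real (card {p \<in> perron_polys n R. \<not> irreducible p}) \<le> C * R^Tm"
      using red_card[OF R1 assms] unfolding C_def TT by simp
    have "real (card (perron_polys n R)) \<ge> R / 8 * ((R/4)^Tm / Kc m^(m+1))"
      using perron_lower[OF elim, of m] unfolding n Tm_def by simp
    also have "R / 8 * ((R/4)^Tm / Kc m^(m+1)) = c0 * R * R^Tm"
      unfolding c0_def by (simp add: power_divide field_simps)
    finally have den: "real (card (perron_polys n R)) \<ge> c0 * R * R^Tm" .
    have pos: "c0 * R * R^Tm > 0" using c0 elim by simp
    have "?f R \<le> (C * R^Tm) / (c0 * R * R^Tm)"
      by (rule frac_le) (use num den pos C0 elim in auto)
    also have "\<dots> = (C / c0) / R" using c0 elim by (simp add: field_simps)
    finally show ?case .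
  qed
  have lim: "((\<lambda>R::real. (C / c0) / R) \<longlongrightarrow> 0) at_top"
    by (rule tendsto_divide_0[OF tendsto_const]) (rule filterlim_at_top_imp_at_infinity[OF filterlim_ident])
  show ?thesis by (rule tendsto_sandwich[OF ev1 ev2 tendsto_const lim])
qed


end
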